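(* As sequences indexed by $n\geq1$, $\mathrm{orb}^\sigma=\mathrm{orb}^\sigma_1\ast\mathbf{1}$ and $\mathrm{orb}^\sigma_1=\mathrm{A113788}$; that is, for every $n\geq1$, $\mathrm{orb}^\sigma(n)=\sum_{d\mid n}\mathrm{orb}^\sigma_1(d)$ and $\mathrm{orb}^\sigma_1(n)=\frac1n\sum_{d\mid n}p(d)\,\mu(n/d)$.
   Context: For $n\geq1$ let $V_n=\{v_0,\dots,v_{n-1}\}$, indices modulo $n$, and let the cyclic group $\langle\sigma\rangle=\{1,\sigma,\dots,\sigma^{n-1}\}$ act on subsets of $V_n$ via $\sigma(v_i)=v_{i+1}$. Let $\mathbf{X}_n$ be the family of subsets $X\subseteq V_n$ such that (a) there is no $i\in\mathbb{Z}_n$ with $v_i,v_{i+1}\in X$, and (b) for every $i\in\mathbb{Z}_n$ at least one of $v_i,v_{i+1},v_{i+2}$ lies in $X$ (for $n\geq 3$: the maximal independent sets of the cycle graph $C_n$). $\mathrm{orb}^\sigma(n)$ is the number of $\langle\sigma\rangle$-orbits of $\mathbf{X}_n$ (unlabeled MISs), and for $d\mid n$, $\mathrm{orb}^\sigma_d(n)$ is the number of these orbits of cardinality $n/d$. Perrin: $p(1)=0,p(2)=2,p(3)=3$, $p(n)=p(n-2)+p(n-3)$ ($n\geq4$). Dirichlet convolution $(f\ast g)(n)=\sum_{d\mid n}f(d)g(n/d)$; $\mu$ Möbius function; $\mathbf{1}(n)=1$; $\mathrm{A113788}(n)=\frac1n(p\ast\mu)(n)$. *)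

theory Defs
  imports "HOL-Computational_Algebra.Computational_Algebra"
begin

text \<open>Vertices v_0..v_{n-1} are represented by the indices 0..n-1; indices are taken mod n.\<close>

definition sigma :: "nat \<Rightarrow> nat set \<Rightarrow> nat set" where
  "sigma n X = (\<lambda>i. (i + 1) mod n) ` X"

definition MIS :: "nat \<Rightarrow> nat set set" where
  "MIS n = {X. X \<subseteq> {..<n}
       \<and> \<not> (\<exists>i<n. i \<in> X \<and> (i + 1) mod n \<in> X)
       \<and> (\<forall>i<n. i \<in> X \<or> (i + 1) mod n \<in> X \<or> (i + 2) mod n \<in> X)}"

definition orbit_sigma :: "nat \<Rightarrow> nat set \<Rightarrow> nat set set" where
  "orbit_sigma n X = {(sigma n ^^ k) X | k. k < n}"

definition orb :: "nat \<Rightarrow> nat" where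
  "orb n = card (orbit_sigma n ` MIS n)"

definition orb_d :: "nat \<Rightarrow> nat \<Rightarrow> nat" where
  "orb_d d n = card {Orb \<in> orbit_sigma n ` MIS n. card Orb = n div d}"

fun perrin :: "nat \<Rightarrow> nat" where
  "perrin 0 = 3"
| "perrin (Suc 0) = 0"
| "perrin (Suc (Suc 0)) = 2"
| "perrin (Suc (Suc (Suc n))) = perrin (Suc n) + perrin n"

definition moebius_mu :: "nat \<Rightarrow> int" where
  "moebius_mu n = (if n = 0 then 0 else if squarefree n then (-1) ^ card (prime_factors n) else 0)"

end

theory Submission
  imports Defs
begin

type_synonym st = "bool \<times> bool"

definition Rs :: "st \<Rightarrow> st \<Rightarrow> bool" where
  "Rs x y = (\<not>(fst x \<and> snd x) \<and> snd x = fst y \<and> \<not>(fst y \<and> snd y) \<and> (fst x \<or> snd x \<or> snd y))"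

definition Sset :: "st set" where "Sset = {(True,False),(False,True),(False,False)}"

fun W :: "nat \<Rightarrow> st \<Rightarrow> st \<Rightarrow> nat" where
  "W 0 s t = (if s = t then 1 else 0)"
| "W (Suc n) s t = (\<Sum>u\<in>Sset. if Rs s u then W n u t else 0)"

definition Wset :: "nat \<Rightarrow> st \<Rightarrow> st \<Rightarrow> st list set" where
  "Wset n s t = {hs. length hs = Suc n \<and> hd hs = s \<and> last hs = t \<and> successively Rs hs}"

lemma finite_Wset: "finite (Wset n s t)"
proof -
  have "Wset n s t \<subseteq> {xs. set xs \<subseteq> UNIV \<and> length xs = Suc n}" unfolding Wset_def by auto
  moreover have "finite {xs. set xs \<subseteq> (UNIV::st set) \<and> length xs = Suc n}"
    by (rule finite_lists_length_eq) simp
  ultimately show ?thesis by (rule finite_subset)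
qed

lemma Rs_Sset: "Rs s u \<Longrightarrow> u \<in> Sset"
  by (cases u) (auto simp: Rs_def Sset_def)

lemma Wset_0: "Wset 0 s t = (if s = t then {[s]} else {})"
  unfolding Wset_def by (auto simp: length_Suc_conv)

lemma Wset_Suc: "Wset (Suc n) s t = (\<Union>u\<in>{u\<in>Sset. Rs s u}. Cons s ` Wset n u t)"
proof (intro set_eqI iffI)
  fix hs assume "hs \<in> Wset (Suc n) s t"
  then obtain b rest where hs: "hs = s # b # rest" and "length rest = n"
    "last (b#rest) = t" "Rs s b" "successively Rs (b#rest)"
    unfolding Wset_def by (auto simp: length_Suc_conv)
  then show "hs \<in> (\<Union>u\<in>{u\<in>Sset. Rs s u}. Cons s ` Wset n u t)"
    using Rs_Sset unfolding Wset_def by fastforce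
next
  fix hs assume "hs \<in> (\<Union>u\<in>{u\<in>Sset. Rs s u}. Cons s ` Wset n u t)"
  then obtain u hs' where "Rs s u" "hs = s # hs'" "hs' \<in> Wset n u t" by auto
  then show "hs \<in> Wset (Suc n) s t" unfolding Wset_def
    by (cases hs') auto
qed

lemma card_Wset: "card (Wset n s t) = W n s t"
proof (induction n arbitrary: s)
  case 0
  then show ?case by (simp add: Wset_0)
next
  case (Suc n)
  have "card (Wset (Suc n) s t) = (\<Sum>u\<in>{u\<in>Sset. Rs s u}. card (Cons s ` Wset n u t))"
    unfolding Wset_Suc
    apply (rule card_UN_disjoint)
      apply (simp add: Sset_def)
     apply (simp add: finite_Wset)
    apply (auto simp: Wset_def)
    done
  also have "\<dots> = (\<Sum>u\<in>{u\<in>Sset. Rs s u}. W n u t)"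
    by (simp add: card_image Suc.IH)
  also have "\<dots> = W (Suc n) s t"
    unfolding W.simps by (rule sum.inter_filter) (simp add: Sset_def)
  finally show ?case .
qed

lemma W_rec: "s \<in> Sset \<Longrightarrow> W (Suc (Suc (Suc n))) s t = W (Suc n) s t + W n s t"
  by (auto simp: Sset_def Rs_def)

definition tr :: "nat \<Rightarrow> nat" where "tr n = (\<Sum>s\<in>Sset. W n s s)"

lemma tr_perrin: "tr n = perrin n"
proof (induction n rule: perrin.induct)
  case (4 n)
  have "tr (Suc (Suc (Suc n))) = (\<Sum>s\<in>Sset. W (Suc n) s s + W n s s)"
    unfolding tr_def by (rule sum.cong[OF refl]) (rule W_rec)
  also have "\<dots> = tr (Suc n) + tr n" by (simp only: tr_def sum.distrib)
  finally show ?case using 4 by simp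
qed (auto simp: tr_def Sset_def Rs_def)

definition CWset :: "nat \<Rightarrow> st list set" where
  "CWset n = {hs. length hs = Suc n \<and> hd hs = last hs \<and> successively Rs hs \<and> hd hs \<in> Sset}"

lemma card_CWset: "card (CWset n) = perrin n"
proof -
  have "CWset n = (\<Union>s\<in>Sset. Wset n s s)"
    unfolding CWset_def Wset_def by auto
  then have "card (CWset n) = (\<Sum>s\<in>Sset. card (Wset n s s))"
    apply simp
    apply (rule card_UN_disjoint)
      apply (simp add: Sset_def)
     apply (simp add: finite_Wset)
    apply (auto simp: Wset_def)
    done
  also have "\<dots> = tr n" by (simp add: card_Wset tr_def)
  finally show ?thesis by (simp add: tr_perrin)
qed

lemma MIS_iff:
  assumes "n > 0"
  shows "X \<in> MIS n \<longleftrightarrow> X \<subseteq> {..<n} \<and>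
     (\<forall>i. \<not> (i mod n \<in> X \<and> Suc i mod n \<in> X) \<and>
          (i mod n \<in> X \<or> Suc i mod n \<in> X \<or> Suc (Suc i) mod n \<in> X))"
proof
  assume X: "X \<in> MIS n"
  show "X \<subseteq> {..<n} \<and>
     (\<forall>i. \<not> (i mod n \<in> X \<and> Suc i mod n \<in> X) \<and>
          (i mod n \<in> X \<or> Suc i mod n \<in> X \<or> Suc (Suc i) mod n \<in> X))"
  proof (intro conjI allI)
    show "X \<subseteq> {..<n}" using X by (simp add: MIS_def)
    fix i
    have j: "i mod n < n" using assms by simp
    have e1: "Suc (i mod n) mod n = Suc i mod n" by (simp add: mod_Suc_eq)
    have e2: "Suc (Suc (i mod n)) mod n = Suc (Suc i) mod n" by (simp add: mod_Suc_Suc_eq)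
    show "\<not> (i mod n \<in> X \<and> Suc i mod n \<in> X)"
      using X j e1 unfolding MIS_def by (metis (no_types, lifting) Suc_eq_plus1 mem_Collect_eq)
    show "i mod n \<in> X \<or> Suc i mod n \<in> X \<or> Suc (Suc i) mod n \<in> X"
      using X j e1 e2 unfolding MIS_def
      by (metis (no_types, lifting) Suc_eq_plus1 add_2_eq_Suc' mem_Collect_eq)
  qed
next
  assume H: "X \<subseteq> {..<n} \<and>
     (\<forall>i. \<not> (i mod n \<in> X \<and> Suc i mod n \<in> X) \<and>
          (i mod n \<in> X \<or> Suc i mod n \<in> X \<or> Suc (Suc i) mod n \<in> X))"
  show "X \<in> MIS n" unfolding MIS_def
  proof (intro CollectI conjI allI impI notI)
    show "X \<subseteq> {..<n}" using H by simp
  next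
    assume "\<exists>i<n. i \<in> X \<and> (i + 1) mod n \<in> X"
    then obtain i where "i < n" "i \<in> X" "(i + 1) mod n \<in> X" by blast
    then show False using H[THEN conjunct2, rule_format, of i] by simp
  next
    fix i assume "i < n"
    then show "i \<in> X \<or> (i + 1) mod n \<in> X \<or> (i + 2) mod n \<in> X"
      using H[THEN conjunct2, rule_format, of i] by simp
  qed
qed

definition enc :: "nat \<Rightarrow> nat set \<Rightarrow> st list" where
  "enc n X = map (\<lambda>i. (i mod n \<in> X, Suc i mod n \<in> X)) [0..<Suc n]"

definition dec :: "nat \<Rightarrow> st list \<Rightarrow> nat set" where
  "dec n hs = {i. i < n \<and> fst (hs ! i)}"

lemma cyc:
  assumes "n > 0" "hs \<in> CWset n"
  shows "Rs (hs ! (i mod n)) (hs ! (Suc i mod n))"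
proof -
  have L: "length hs = Suc n" and HL: "hd hs = last hs" and S: "successively Rs hs"
    using assms(2) unfolding CWset_def by auto
  have j: "i mod n < n" using assms by simp
  have R: "Rs (hs ! (i mod n)) (hs ! Suc (i mod n))"
    using successively_nth[OF S] j L by simp
  show ?thesis
  proof (cases "Suc (i mod n) = n")
    case True
    then have "Suc i mod n = 0" by (simp add: mod_Suc)
    moreover have "hs ! n = hs ! 0"
      proof -
      have ne: "hs \<noteq> []" using L by auto
      have "hs ! n = last hs" using ne L by (simp add: last_conv_nth)
      also have "\<dots> = hd hs" using HL by simp
      also have "\<dots> = hs ! 0" using ne by (simp add: hd_conv_nth)
      finally show ?thesis .
    qed
    ultimately show ?thesis using R True by simp
  next
    case False
    then have "Suc i mod n = Suc (i mod n)" by (simp add: mod_Suc)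
    then show ?thesis using R by simp
  qed
qed

lemma hs_mod:
  assumes "n > 0" "hs \<in> CWset n" "i \<le> n"
  shows "hs ! (i mod n) = hs ! i"
proof (cases "i = n")
  case True
  have L: "length hs = Suc n" and HL: "hd hs = last hs"
    using assms(2) unfolding CWset_def by auto
  have "hs ! n = hs ! 0"
    proof -
      have ne: "hs \<noteq> []" using L by auto
      have "hs ! n = last hs" using ne L by (simp add: last_conv_nth)
      also have "\<dots> = hd hs" using HL by simp
      also have "\<dots> = hs ! 0" using ne by (simp add: hd_conv_nth)
      finally show ?thesis .
    qed
  then show ?thesis using True by simp
next
  case False
  then show ?thesis using assms by simp
qed

lemma dec_mem:
  assumes "n > 0" "hs \<in> CWset n"
  shows "j mod n \<in> dec n hs \<longleftrightarrow> fst (hs ! (j mod n))"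
  using assms by (simp add: dec_def)

lemma dec_MIS:
  assumes "n > 0" "hs \<in> CWset n"
  shows "dec n hs \<in> MIS n"
  unfolding MIS_iff[OF assms(1)]
proof (intro conjI allI)
  show "dec n hs \<subseteq> {..<n}" by (auto simp: dec_def)
  fix i
  have R1: "Rs (hs ! (i mod n)) (hs ! (Suc i mod n))" by (rule cyc[OF assms])
  have R2: "Rs (hs ! (Suc i mod n)) (hs ! (Suc (Suc i) mod n))" by (rule cyc[OF assms])
  show "\<not> (i mod n \<in> dec n hs \<and> Suc i mod n \<in> dec n hs)"
    using R1 by (auto simp: dec_mem[OF assms] Rs_def)
  show "i mod n \<in> dec n hs \<or> Suc i mod n \<in> dec n hs \<or> Suc (Suc i) mod n \<in> dec n hs"
    using R1 R2 unfolding dec_mem[OF assms] Rs_def by metis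
qed

lemma enc_CW:
  assumes "n > 0" "X \<in> MIS n"
  shows "enc n X \<in> CWset n"
proof -
  note M = assms(2)[unfolded MIS_iff[OF assms(1)]]
  have len: "length (enc n X) = Suc n" by (simp add: enc_def)
  have nth: "enc n X ! i = (i mod n \<in> X, Suc i mod n \<in> X)" if "i < Suc n" for i
    using that by (simp add: enc_def del: upt_Suc)
  have ne: "enc n X \<noteq> []" using len by auto
  have hd: "hd (enc n X) = enc n X ! 0" using ne by (simp add: hd_conv_nth)
  have last: "last (enc n X) = enc n X ! n" using ne len by (simp add: last_conv_nth)
  have e0: "enc n X ! 0 = (0 mod n \<in> X, Suc 0 mod n \<in> X)" using nth[of 0] by simp
  have en: "enc n X ! n = (0 mod n \<in> X, Suc 0 mod n \<in> X)" using nth[of n]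
    by (simp add: mod_Suc_eq[of n n, symmetric])
  have succ: "successively Rs (enc n X)"
    unfolding successively_conv_nth
  proof (intro allI impI)
    fix i assume "Suc i < length (enc n X)"
    then have i: "i < n" using len by simp
    show "Rs (enc n X ! i) (enc n X ! Suc i)"
      using M[THEN conjunct2, rule_format, of i] M[THEN conjunct2, rule_format, of "Suc i"]
        nth[of i] nth[of "Suc i"] i by (simp add: Rs_def)
  qed
  have "hd (enc n X) \<in> Sset"
    using M[THEN conjunct2, rule_format, of 0] assms(1) hd e0 by (auto simp: Sset_def)
  then show ?thesis using len hd last e0 en succ by (simp add: CWset_def)
qed

lemma card_MIS:
  assumes "n > 0"
  shows "card (MIS n) = perrin n"
proof -
  have "bij_betw (enc n) (MIS n) (CWset n)"
  proof (rule bij_betw_byWitness[where f' = "dec n"])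
    show "\<forall>a\<in>MIS n. dec n (enc n a) = a"
    proof
      fix X assume X: "X \<in> MIS n"
      then have "X \<subseteq> {..<n}" by (simp add: MIS_def)
      then show "dec n (enc n X) = X"
        by (auto simp: dec_def enc_def simp del: upt_Suc)
    qed
    show "\<forall>a'\<in>CWset n. enc n (dec n a') = a'"
    proof
      fix hs assume hs: "hs \<in> CWset n"
      have len: "length hs = Suc n" using hs by (simp add: CWset_def)
      show "enc n (dec n hs) = hs"
      proof (rule nth_equalityI)
        show "length (enc n (dec n hs)) = length hs" using len by (simp add: enc_def)
        fix i assume "i < length (enc n (dec n hs))"
        then have i: "i < Suc n" by (simp add: enc_def)
        have "enc n (dec n hs) ! i = (i mod n \<in> dec n hs, Suc i mod n \<in> dec n hs)"
          using i by (simp add: enc_def del: upt_Suc)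
        also have "\<dots> = (fst (hs ! (i mod n)), fst (hs ! (Suc i mod n)))"
          using assms hs by (simp add: dec_def)
        also have "\<dots> = hs ! (i mod n)"
          using cyc[OF assms hs, of i] by (simp add: Rs_def prod_eq_iff)
        also have "\<dots> = hs ! i" using hs_mod[OF assms hs] i by simp
        finally show "enc n (dec n hs) ! i = hs ! i" .
      qed
    qed
    show "enc n ` MIS n \<subseteq> CWset n" using enc_CW[OF assms] by auto
    show "dec n ` CWset n \<subseteq> MIS n" using dec_MIS[OF assms] by auto
  qed
  then have "card (MIS n) = card (CWset n)" by (rule bij_betw_same_card)
  then show ?thesis by (simp add: card_CWset)
qed

definition rot :: "nat \<Rightarrow> nat \<Rightarrow> nat set \<Rightarrow> nat set" where
  "rot n k X = (\<lambda>i. (i + k) mod n) ` X"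

lemma rot_0: "X \<subseteq> {..<n} \<Longrightarrow> rot n 0 X = X"
  unfolding rot_def by (auto simp: image_iff subset_iff)

lemma sigma_pow: "X \<subseteq> {..<n} \<Longrightarrow> (sigma n ^^ k) X = rot n k X"
proof (induction k)
  case 0
  then show ?case by (simp add: rot_0)
next
  case (Suc k)
  have "(sigma n ^^ Suc k) X = sigma n ((sigma n ^^ k) X)" by simp
  also have "\<dots> = sigma n (rot n k X)" using Suc by simp
  also have "\<dots> = (\<lambda>i. (i + 1) mod n) ` rot n k X" by (simp add: sigma_def)
  also have "\<dots> = rot n (Suc k) X"
    unfolding rot_def image_image by (rule image_cong) (simp_all add: mod_Suc_eq)
  finally show ?case .
qed

lemma orbit_eq: "X \<subseteq> {..<n} \<Longrightarrow> orbit_sigma n X = (\<lambda>k. rot n k X) ` {..<n}"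
  unfolding orbit_sigma_def by (auto simp: sigma_pow)

lemma rot_sub: "n > 0 \<Longrightarrow> rot n k X \<subseteq> {..<n}"
  unfolding rot_def by auto

lemma rot_rot: "rot n a (rot n b X) = rot n (a + b) X"
  unfolding rot_def image_image
proof (rule image_cong)
  fix x show "((x + b) mod n + a) mod n = (x + (a + b)) mod n"
    by (metis add.assoc add.commute mod_add_left_eq)
qed simp

lemma rot_mod: "rot n (k mod n) X = rot n k X"
  unfolding rot_def by (rule image_cong) (simp_all add: mod_add_right_eq)

lemma rot_n: "X \<subseteq> {..<n} \<Longrightarrow> rot n n X = X"
  using rot_mod[of n n X] rot_0[of X n] by simp

lemma rot_mem:
  assumes "X \<subseteq> {..<n}" "n > 0" "(k + c) mod n = 0"
  shows "j mod n \<in> rot n k X \<longleftrightarrow> (j + c) mod n \<in> X"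
proof
  assume "j mod n \<in> rot n k X"
  then obtain x where x: "x \<in> X" "j mod n = (x + k) mod n" unfolding rot_def by auto
  have "(j + c) mod n = (j mod n + c) mod n" by (simp add: mod_add_left_eq)
  also have "\<dots> = ((x + k) mod n + c) mod n" using x by simp
  also have "\<dots> = (x + (k + c)) mod n" by (simp add: mod_add_left_eq add.assoc)
  also have "\<dots> = (x + (k + c) mod n) mod n" by (simp add: mod_add_right_eq)
  also have "\<dots> = x" using assms x by auto
  finally show "(j + c) mod n \<in> X" using x by simp
next
  assume H: "(j + c) mod n \<in> X"
  have "((j + c) mod n + k) mod n = (j + (k + c)) mod n"
    by (metis add.assoc add.commute mod_add_left_eq)
  also have "\<dots> = (j + (k + c) mod n) mod n" by (simp add: mod_add_right_eq)
  also have "\<dots> = j mod n" using assms by simp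
  finally show "j mod n \<in> rot n k X" using H unfolding rot_def by force
qed

lemma exists_c:
  assumes "n > 0" shows "\<exists>c. (k + c) mod n = (0::nat)"
proof (rule exI[of _ "n - k mod n"])
  have "k mod n < n" using assms by simp
  then have "(k mod n + (n - k mod n)) = n" by simp
  then show "(k + (n - k mod n)) mod n = 0"
    by (metis mod_add_left_eq mod_self)
qed

lemma rot_MIS:
  assumes "n > 0" "X \<in> MIS n"
  shows "rot n k X \<in> MIS n"
proof -
  have XS: "X \<subseteq> {..<n}" using assms by (simp add: MIS_def)
  obtain c :: nat where c: "(k + c) mod n = 0" using exists_c[OF assms(1), of k] by (elim exE)
  note mem = rot_mem[OF XS assms(1) c]
  note M = assms(2)[unfolded MIS_iff[OF assms(1)], THEN conjunct2, rule_format]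
  show ?thesis unfolding MIS_iff[OF assms(1)]
  proof (intro conjI allI)
    show "rot n k X \<subseteq> {..<n}" by (rule rot_sub[OF assms(1)])
    fix i
    show "\<not> (i mod n \<in> rot n k X \<and> Suc i mod n \<in> rot n k X)"
      using M[of "i + c"] by (simp add: mem)
    show "i mod n \<in> rot n k X \<or> Suc i mod n \<in> rot n k X \<or> Suc (Suc i) mod n \<in> rot n k X"
      using M[of "i + c"] by (simp add: mem)
  qed
qed

definition per :: "nat \<Rightarrow> nat set \<Rightarrow> nat" where
  "per n X = (LEAST k. 0 < k \<and> rot n k X = X)"

locale rotset =
  fixes n :: nat and X :: "nat set"
  assumes npos: "n > 0" and XS: "X \<subseteq> {..<n}"
begin

lemma per_props: "0 < per n X \<and> rot n (per n X) X = X"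
  unfolding per_def by (rule LeastI[of _ n]) (simp add: npos rot_n XS)

lemma per_le: "per n X \<le> n"
  unfolding per_def by (rule Least_le) (simp add: npos rot_n XS)

lemma rot_per_mult: "rot n (per n X * m) X = X"
proof (induction m)
  case 0
  then show ?case by (simp add: rot_0 XS)
next
  case (Suc m)
  have "rot n (per n X * Suc m) X = rot n (per n X) (rot n (per n X * m) X)"
    by (simp add: rot_rot)
  then show ?case using Suc per_props by simp
qed

lemma rot_mod_per: "rot n k X = rot n (k mod per n X) X"
proof -
  have "k = k mod per n X + per n X * (k div per n X)" by simp
  then have "rot n k X = rot n (k mod per n X) (rot n (per n X * (k div per n X)) X)"
    by (metis rot_rot)
  then show ?thesis by (simp add: rot_per_mult)
qed

lemma per_dvd: "rot n k X = X \<Longrightarrow> per n X dvd k"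
proof (rule ccontr)
  assume H: "rot n k X = X" "\<not> per n X dvd k"
  then have "0 < k mod per n X" by (simp add: mod_greater_zero_iff_not_dvd)
  moreover have "rot n (k mod per n X) X = X" using H rot_mod_per by simp
  moreover have "k mod per n X < per n X" using per_props by simp
  ultimately show False unfolding per_def using not_less_Least by blast
qed

lemma per_dvd_n: "per n X dvd n"
  by (rule per_dvd) (simp add: rot_n XS)

lemma per_inj:
  assumes "a \<le> b" "b < per n X" "rot n a X = rot n b X"
  shows "a = b"
proof -
  have "rot n (b + (n - a)) X = rot n (n - a) (rot n b X)" by (simp add: rot_rot add.commute)
  also have "\<dots> = rot n (n - a) (rot n a X)" using assms by simp
  also have "\<dots> = rot n (n - a + a) X" by (simp add: rot_rot)
  also have "\<dots> = X" using assms per_le by (simp add: rot_n XS)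
  finally have "per n X dvd b + (n - a)" by (rule per_dvd)
  moreover have "b + (n - a) = n + (b - a)" using assms per_le by simp
  ultimately have "per n X dvd b - a" using per_dvd_n by (simp add: dvd_add_right_iff)
  moreover have "b - a < per n X" using assms by simp
  ultimately have "b - a = 0" using dvd_imp_le by (metis not_le neq0_conv)
  then show ?thesis using assms by simp
qed

lemma orbit_per: "orbit_sigma n X = (\<lambda>k. rot n k X) ` {..<per n X}"
proof -
  have "(\<lambda>k. rot n k X) ` {..<n} = (\<lambda>k. rot n k X) ` {..<per n X}"
  proof
    show "(\<lambda>k. rot n k X) ` {..<n} \<subseteq> (\<lambda>k. rot n k X) ` {..<per n X}"
    proof
      fix Z assume "Z \<in> (\<lambda>k. rot n k X) ` {..<n}"
      then obtain k where "Z = rot n k X" by auto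
      then have "Z = rot n (k mod per n X) X" using rot_mod_per by simp
      moreover have "k mod per n X < per n X" using per_props by simp
      ultimately show "Z \<in> (\<lambda>k. rot n k X) ` {..<per n X}" by blast
    qed
    show "(\<lambda>k. rot n k X) ` {..<per n X} \<subseteq> (\<lambda>k. rot n k X) ` {..<n}"
      using per_le by auto
  qed
  then show ?thesis by (simp add: orbit_eq XS)
qed

lemma card_orbit: "card (orbit_sigma n X) = per n X"
proof -
  have "inj_on (\<lambda>k. rot n k X) {..<per n X}"
  proof (rule inj_onI)
    fix a b assume "a \<in> {..<per n X}" "b \<in> {..<per n X}" "rot n a X = rot n b X"
    then show "a = b" using per_inj by (metis lessThan_iff nat_le_linear)
  qed
  then show ?thesis by (simp add: orbit_per card_image)
qed

lemma card_orbit_dvd: "card (orbit_sigma n X) dvd n"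
  using card_orbit per_dvd_n by simp

lemma card_orbit_rot: "rot n (card (orbit_sigma n X)) X = X"
  using card_orbit per_props by simp

lemma card_orbit_pos: "card (orbit_sigma n X) > 0"
  using card_orbit per_props by simp

lemma self_in_orbit: "X \<in> orbit_sigma n X"
proof -
  have "rot n 0 X \<in> (\<lambda>k. rot n k X) ` {..<n}" using npos by auto
  then show ?thesis using orbit_eq[OF XS] rot_0[OF XS] by simp
qed

lemma orbit_sub: "Y \<in> orbit_sigma n X \<Longrightarrow> orbit_sigma n Y \<subseteq> orbit_sigma n X"
proof -
  assume "Y \<in> orbit_sigma n X"
  then obtain k where Y: "Y = rot n k X" using orbit_eq[OF XS] by auto
  then have YS: "Y \<subseteq> {..<n}" using rot_sub[OF npos] by simp
  show ?thesis
  proof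
    fix Z assume "Z \<in> orbit_sigma n Y"
    then obtain j where "Z = rot n j Y" using orbit_eq[OF YS] by auto
    then have "Z = rot n ((j + k) mod n) X" by (simp add: Y rot_rot rot_mod)
    then show "Z \<in> orbit_sigma n X" using orbit_eq[OF XS] npos by auto
  qed
qed

lemma orbit_back: "Y \<in> orbit_sigma n X \<Longrightarrow> X \<in> orbit_sigma n Y"
proof -
  assume "Y \<in> orbit_sigma n X"
  then obtain k where Y: "Y = rot n k X" "k < n" using orbit_eq[OF XS] by auto
  then have YS: "Y \<subseteq> {..<n}" using rot_sub[OF npos] by simp
  have "rot n ((n - k) mod n) Y = rot n ((n - k) mod n + k) X" by (simp add: Y rot_rot)
  also have "\<dots> = rot n (n - k + k) X" by (metis rot_mod mod_add_left_eq)
  also have "\<dots> = X" using Y by (simp add: rot_n XS)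
  finally show ?thesis using orbit_eq[OF YS] npos by (metis image_eqI lessThan_iff mod_less_divisor)
qed

end

lemma orbit_same:
  assumes "n > 0" "X \<subseteq> {..<n}" "Y \<in> orbit_sigma n X"
  shows "orbit_sigma n Y = orbit_sigma n X"
proof -
  interpret X: rotset n X using assms by unfold_locales
  obtain k where "Y = rot n k X" using orbit_eq[OF assms(2)] assms(3) by auto
  then have YS: "Y \<subseteq> {..<n}" using rot_sub[OF assms(1)] by simp
  interpret Y: rotset n Y using assms YS by unfold_locales
  show ?thesis using X.orbit_sub[OF assms(3)] Y.orbit_sub[OF X.orbit_back[OF assms(3)]] by blast
qed

definition lift :: "nat \<Rightarrow> nat \<Rightarrow> nat set \<Rightarrow> nat set" where
  "lift n d Y = {i. i < n \<and> i mod d \<in> Y}"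

lemma lift_sub: "lift n d Y \<subseteq> {..<n}" by (auto simp: lift_def)

lemma lift_mem: "d dvd n \<Longrightarrow> n > 0 \<Longrightarrow> (j mod n \<in> lift n d Y \<longleftrightarrow> j mod d \<in> Y)"
  by (simp add: lift_def mod_mod_cancel)

lemma lift_MIS:
  assumes "d dvd n" "0 < d" "0 < n" "Y \<subseteq> {..<d}"
  shows "lift n d Y \<in> MIS n \<longleftrightarrow> Y \<in> MIS d"
  unfolding MIS_iff[OF assms(2)] MIS_iff[OF assms(3)]
  using assms lift_sub[of n d Y] by (simp add: lift_mem[OF assms(1) assms(3)])

lemma lift_inter: "d \<le> n \<Longrightarrow> Y \<subseteq> {..<d} \<Longrightarrow> lift n d Y \<inter> {..<d} = Y"
  by (auto simp: lift_def subset_iff)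

lemma rot_lift:
  assumes "d dvd n" "0 < d" "Y \<subseteq> {..<d}"
    and n: "0 < n"
  shows "rot n k (lift n d Y) = lift n d (rot d k Y)"
proof -
  obtain c :: nat where c: "(k + c) mod n = 0" using exists_c[OF n, of k] by (elim exE)
  have cd: "(k + c) mod d = 0" using c assms(1) by (metis mod_0 mod_mod_cancel)
  show ?thesis
  proof (rule set_eqI)
    fix i
    show "i \<in> rot n k (lift n d Y) \<longleftrightarrow> i \<in> lift n d (rot d k Y)"
    proof (cases "i < n")
      case True
      have "i \<in> rot n k (lift n d Y) \<longleftrightarrow> i mod n \<in> rot n k (lift n d Y)" using True by simp
      also have "\<dots> \<longleftrightarrow> (i + c) mod n \<in> lift n d Y" by (rule rot_mem[OF lift_sub n c])
      also have "\<dots> \<longleftrightarrow> (i + c) mod d \<in> Y" by (rule lift_mem[OF assms(1) n])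
      also have "\<dots> \<longleftrightarrow> i mod d \<in> rot d k Y" by (rule rot_mem[OF assms(3) assms(2) cd, symmetric])
      also have "\<dots> \<longleftrightarrow> i \<in> lift n d (rot d k Y)" using True by (simp add: lift_def)
      finally show ?thesis .
    next
      case False
      then show ?thesis using rot_sub[OF n, of k "lift n d Y"] by (auto simp: lift_def)
    qed
  qed
qed

lemma lift_per:
  assumes "d dvd n" "0 < d" "X \<subseteq> {..<n}" "rot n d X = X"
    and n: "0 < n"
  shows "lift n d (X \<inter> {..<d}) = X"
proof -
  have dn: "d \<le> n" using assms n by (simp add: dvd_imp_le)
  have rm: "rot n (d * m) X = X" for m
  proof (induction m)
    case 0
    then show ?case by (simp add: rot_0 assms(3))
  next
    case (Suc m)
    have "rot n (d * Suc m) X = rot n d (rot n (d * m) X)" by (simp add: rot_rot)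
    then show ?case using Suc assms(4) by simp
  qed
  have key: "i \<in> X \<longleftrightarrow> i mod d \<in> X" if i: "i < n" for i
  proof
    assume "i mod d \<in> X"
    moreover have "i = (i mod d + d * (i div d)) mod n" using i by simp
    ultimately have "i \<in> rot n (d * (i div d)) X" unfolding rot_def image_iff by blast
    then show "i \<in> X" using rm by simp
  next
    assume iX: "i \<in> X"
    define q where "q = i div d"
    define m where "m = n div d - q"
    have qle: "q \<le> n div d" unfolding q_def using i by (simp add: div_le_mono)
    have "m + q = n div d" unfolding m_def using qle by simp
    then have "d * m + d * q = n" using assms(1) by (metis add_mult_distrib2 dvd_mult_div_cancel)
    moreover have "i mod d + d * q = i" unfolding q_def by (rule mod_mult_div_eq)
    ultimately have e: "i + d * m = n + i mod d" by linarith
    have "i mod d < n" using dn assms(2) by (meson less_le_trans mod_less_divisor)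
    then have "i mod d = (i + d * m) mod n" unfolding e by simp
    then have "i mod d \<in> rot n (d * m) X" unfolding rot_def image_iff using iX by blast
    then show "i mod d \<in> X" using rm by simp
  qed
  show ?thesis
  proof (rule set_eqI)
    fix i show "i \<in> lift n d (X \<inter> {..<d}) \<longleftrightarrow> i \<in> X"
    proof
      assume "i \<in> lift n d (X \<inter> {..<d})"
      then have "i < n" "i mod d \<in> X" unfolding lift_def by auto
      then show "i \<in> X" using key[of i] by blast
    next
      assume iX: "i \<in> X"
      then have i: "i < n" using assms(3) by auto
      then have "i mod d \<in> X" using key[of i] iX by blast
      moreover have "i mod d < d" using assms(2) by simp
      ultimately show "i \<in> lift n d (X \<inter> {..<d})" using i unfolding lift_def by blast
    qed
  qed
qed

lemma orbit_lift:
  assumes "d dvd n" "0 < d" "Y \<subseteq> {..<d}"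
    and n: "0 < n"
  shows "orbit_sigma n (lift n d Y) = lift n d ` orbit_sigma d Y"
proof -
  have dn: "d \<le> n" using assms n by (simp add: dvd_imp_le)
  have "orbit_sigma n (lift n d Y) = (\<lambda>k. rot n k (lift n d Y)) ` {..<n}"
    by (rule orbit_eq[OF lift_sub])
  also have "\<dots> = (\<lambda>k. lift n d (rot d k Y)) ` {..<n}"
    using rot_lift[OF assms] by simp
  also have "\<dots> = lift n d ` ((\<lambda>k. rot d k Y) ` {..<n})" by (simp add: image_image)
  also have "(\<lambda>k. rot d k Y) ` {..<n} = (\<lambda>k. rot d k Y) ` {..<d}"
  proof
    show "(\<lambda>k. rot d k Y) ` {..<n} \<subseteq> (\<lambda>k. rot d k Y) ` {..<d}"
    proof
      fix Z assume "Z \<in> (\<lambda>k. rot d k Y) ` {..<n}"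
      then obtain k where "Z = rot d k Y" by auto
      then have "Z = rot d (k mod d) Y" by (simp add: rot_mod)
      moreover have "k mod d < d" using assms by simp
      ultimately show "Z \<in> (\<lambda>k. rot d k Y) ` {..<d}" by blast
    qed
    show "(\<lambda>k. rot d k Y) ` {..<d} \<subseteq> (\<lambda>k. rot d k Y) ` {..<n}" using dn by auto
  qed
  also have "(\<lambda>k. rot d k Y) ` {..<d} = orbit_sigma d Y" by (rule orbit_eq[OF assms(3), symmetric])
  finally show ?thesis .
qed

lemma orbit_elem_sub:
  assumes "0 < n" "X \<subseteq> {..<n}" "Z \<in> orbit_sigma n X"
  shows "Z \<subseteq> {..<n}"
proof -
  obtain k where "Z = rot n k X" using orbit_eq[OF assms(2)] assms(3) by auto
  then show ?thesis using rot_sub[OF assms(1)] by simp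
qed

lemma card_orbit_lift:
  assumes "d dvd n" "0 < d" "Y \<subseteq> {..<d}"
    and n: "0 < n"
  shows "card (orbit_sigma n (lift n d Y)) = card (orbit_sigma d Y)"
proof -
  have dn: "d \<le> n" using assms n by (simp add: dvd_imp_le)
  have "inj_on (lift n d) (orbit_sigma d Y)"
  proof (rule inj_onI)
    fix A B assume A: "A \<in> orbit_sigma d Y" and B: "B \<in> orbit_sigma d Y" and eq: "lift n d A = lift n d B"
    have "A \<subseteq> {..<d}" "B \<subseteq> {..<d}" using A B orbit_elem_sub[OF assms(2,3)] by auto
    then show "A = B" using eq lift_inter[OF dn] by metis
  qed
  then show ?thesis by (simp add: orbit_lift[OF assms] card_image)
qed

definition E :: "nat \<Rightarrow> nat \<Rightarrow> nat set set" where
  "E n d = {X \<in> MIS n. card (orbit_sigma n X) = d}"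

definition OD :: "nat \<Rightarrow> nat \<Rightarrow> nat set set set" where
  "OD n d = {Ob \<in> orbit_sigma n ` MIS n. card Ob = d}"

lemma finite_MIS: "finite (MIS n)"
  by (rule finite_subset[of _ "Pow {..<n}"]) (auto simp: MIS_def)

lemma MIS_sub: "X \<in> MIS n \<Longrightarrow> X \<subseteq> {..<n}" by (simp add: MIS_def)

lemma finite_orbit: "finite (orbit_sigma n X)"
  unfolding orbit_sigma_def by simp

lemma C1:
  assumes n: "n > 0"
  shows "card (E n d) = d * card (OD n d)"
proof -
  have "E n d = \<Union> (OD n d)"
  proof
    show "E n d \<subseteq> \<Union> (OD n d)"
    proof
      fix X assume X: "X \<in> E n d"
      then have XM: "X \<in> MIS n" and c: "card (orbit_sigma n X) = d" by (auto simp: E_def)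
      interpret rotset n X using n MIS_sub[OF XM] by unfold_locales
      have "orbit_sigma n X \<in> OD n d" using XM c unfolding OD_def by blast
      then show "X \<in> \<Union> (OD n d)" using self_in_orbit by blast
    qed
    show "\<Union> (OD n d) \<subseteq> E n d"
    proof
      fix X assume "X \<in> \<Union> (OD n d)"
      then obtain Y where YM: "Y \<in> MIS n" and c: "card (orbit_sigma n Y) = d"
        and XY: "X \<in> orbit_sigma n Y" unfolding OD_def by auto
      obtain k where "X = rot n k Y" using XY orbit_eq[OF MIS_sub[OF YM]] by auto
      then have "X \<in> MIS n" using rot_MIS[OF n YM] by simp
      moreover have "orbit_sigma n X = orbit_sigma n Y" by (rule orbit_same[OF n MIS_sub[OF YM] XY])
      ultimately show "X \<in> E n d" using c by (simp add: E_def)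
    qed
  qed
  moreover have "card (\<Union> (OD n d)) = sum card (OD n d)"
  proof (rule card_Union_disjoint)
    show "pairwise disjnt (OD n d)"
    proof (rule pairwiseI)
      fix A B assume A: "A \<in> OD n d" and B: "B \<in> OD n d" and ne: "A \<noteq> B"
      obtain Y1 where Y1: "Y1 \<in> MIS n" "A = orbit_sigma n Y1" using A unfolding OD_def by auto
      obtain Y2 where Y2: "Y2 \<in> MIS n" "B = orbit_sigma n Y2" using B unfolding OD_def by auto
      show "disjnt A B"
      proof (rule ccontr)
        assume "\<not> disjnt A B"
        then obtain Z where "Z \<in> A" "Z \<in> B" by (auto simp: disjnt_def)
        then have "orbit_sigma n Z = A" "orbit_sigma n Z = B"
          using orbit_same[OF n MIS_sub[OF Y1(1)], of Z] orbit_same[OF n MIS_sub[OF Y2(1)], of Z] Y1(2) Y2(2) by simp_all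
        then show False using ne by simp
      qed
    qed
    show "\<And>A. A \<in> OD n d \<Longrightarrow> finite A" unfolding OD_def using finite_orbit by auto
  qed
  moreover have "sum card (OD n d) = (\<Sum>A\<in>OD n d. d)" by (rule sum.cong) (auto simp: OD_def)
  moreover have "(\<Sum>A\<in>OD n d. d) = d * card (OD n d)" by simp
  ultimately show ?thesis by simp
qed

lemma C2:
  assumes "d dvd n" "0 < d"
    and n: "0 < n"
  shows "card (E n d) = card (E d d)"
proof -
  have dn: "d \<le> n" using assms n by (simp add: dvd_imp_le)
  have "bij_betw (lift n d) (E d d) (E n d)"
  proof (rule bij_betw_byWitness[where f' = "\<lambda>X. X \<inter> {..<d}"])
    show "\<forall>a\<in>E d d. lift n d a \<inter> {..<d} = a"
    proof
      fix Y assume "Y \<in> E d d"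
      then have "Y \<subseteq> {..<d}" using MIS_sub by (simp add: E_def)
      then show "lift n d Y \<inter> {..<d} = Y" by (rule lift_inter[OF dn])
    qed
    show "\<forall>a'\<in>E n d. lift n d (a' \<inter> {..<d}) = a'"
    proof
      fix X assume "X \<in> E n d"
      then have XM: "X \<in> MIS n" and c: "card (orbit_sigma n X) = d" by (auto simp: E_def)
      interpret rotset n X using n MIS_sub[OF XM] by unfold_locales
      have "rot n d X = X" using card_orbit_rot c by simp
      then show "lift n d (X \<inter> {..<d}) = X"
        using lift_per[OF assms(1,2) MIS_sub[OF XM] _ n] by simp
    qed
    show "lift n d ` E d d \<subseteq> E n d"
    proof
      fix X assume "X \<in> lift n d ` E d d"
      then obtain Y where Y: "Y \<in> E d d" "X = lift n d Y" by auto
      then have YM: "Y \<in> MIS d" and c: "card (orbit_sigma d Y) = d" by (auto simp: E_def)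
      show "X \<in> E n d" using Y(2) lift_MIS[OF assms(1,2) n MIS_sub[OF YM]] YM
          card_orbit_lift[OF assms(1,2) MIS_sub[OF YM] n] c by (simp add: E_def)
    qed
    show "(\<lambda>X. X \<inter> {..<d}) ` E n d \<subseteq> E d d"
    proof
      fix Y assume "Y \<in> (\<lambda>X. X \<inter> {..<d}) ` E n d"
      then obtain X where X: "X \<in> E n d" "Y = X \<inter> {..<d}" by auto
      then have XM: "X \<in> MIS n" and c: "card (orbit_sigma n X) = d" by (auto simp: E_def)
      interpret rotset n X using n MIS_sub[OF XM] by unfold_locales
      have "rot n d X = X" using card_orbit_rot c by simp
      then have XL: "lift n d Y = X"
        using X(2) lift_per[OF assms(1,2) MIS_sub[OF XM] _ n] by simp
      have YS: "Y \<subseteq> {..<d}" using X(2) by auto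
      have "Y \<in> MIS d" using lift_MIS[OF assms(1,2) n YS] XL XM by simp
      moreover have "card (orbit_sigma d Y) = d"
        using card_orbit_lift[OF assms(1,2) YS n] XL c by simp
      ultimately show "Y \<in> E d d" by (simp add: E_def)
    qed
  qed
  then show ?thesis by (simp add: bij_betw_same_card)
qed

lemma OD_eq:
  assumes "d dvd n" "0 < n"
  shows "card (OD n d) = orb_d 1 d"
proof -
  have d0: "0 < d" using assms by (simp add: dvd_pos_nat)
  have "d * card (OD n d) = card (E n d)" using C1[OF assms(2), of d] by simp
  also have "\<dots> = card (E d d)" by (rule C2[OF assms(1) d0 assms(2)])
  also have "\<dots> = d * card (OD d d)" using C1[OF d0, of d] by simp
  finally have "d * card (OD n d) = d * card (OD d d)" .
  then have "card (OD n d) = card (OD d d)" using d0 by simp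
  then show ?thesis by (simp add: orb_d_def OD_def)
qed

lemma orb_sum:
  assumes n: "0 < n"
  shows "orb n = (\<Sum>d | d dvd n. orb_d 1 d)"
proof -
  have "orbit_sigma n ` MIS n = (\<Union>d\<in>{d. d dvd n}. OD n d)"
  proof
    show "orbit_sigma n ` MIS n \<subseteq> (\<Union>d\<in>{d. d dvd n}. OD n d)"
    proof
      fix Ob assume "Ob \<in> orbit_sigma n ` MIS n"
      then obtain X where X: "X \<in> MIS n" "Ob = orbit_sigma n X" by auto
      interpret rotset n X using n MIS_sub[OF X(1)] by unfold_locales
      show "Ob \<in> (\<Union>d\<in>{d. d dvd n}. OD n d)" using X card_orbit_dvd unfolding OD_def by auto
    qed
    show "(\<Union>d\<in>{d. d dvd n}. OD n d) \<subseteq> orbit_sigma n ` MIS n" unfolding OD_def by auto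
  qed
  then have "orb n = card (\<Union>d\<in>{d. d dvd n}. OD n d)" by (simp add: orb_def)
  also have "\<dots> = (\<Sum>d | d dvd n. card (OD n d))"
    by (rule card_UN_disjoint) (auto simp: n OD_def finite_MIS)
  also have "\<dots> = (\<Sum>d | d dvd n. orb_d 1 d)"
    by (rule sum.cong) (auto simp: OD_eq n)
  finally show ?thesis .
qed

lemma perrin_sum:
  assumes n: "0 < n"
  shows "perrin n = (\<Sum>d | d dvd n. d * orb_d 1 d)"
proof -
  have "MIS n = (\<Union>d\<in>{d. d dvd n}. E n d)"
  proof
    show "MIS n \<subseteq> (\<Union>d\<in>{d. d dvd n}. E n d)"
    proof
      fix X assume X: "X \<in> MIS n"
      interpret rotset n X using n MIS_sub[OF X] by unfold_locales
      show "X \<in> (\<Union>d\<in>{d. d dvd n}. E n d)" using X card_orbit_dvd unfolding E_def by auto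
    qed
    show "(\<Union>d\<in>{d. d dvd n}. E n d) \<subseteq> MIS n" unfolding E_def by auto
  qed
  then have "perrin n = card (\<Union>d\<in>{d. d dvd n}. E n d)" using card_MIS[OF n] by simp
  also have "\<dots> = (\<Sum>d | d dvd n. card (E n d))"
    by (rule card_UN_disjoint) (auto simp: n E_def finite_MIS)
  also have "\<dots> = (\<Sum>d | d dvd n. d * orb_d 1 d)"
    by (rule sum.cong) (auto simp: C1 OD_eq n)
  finally show ?thesis .
qed

lemma pow_sum:
  assumes "finite P"
  shows "(\<Sum>T\<in>Pow P. (-1::int) ^ card T) = (if P = {} then 1 else 0)"
  using assms
proof (induction P rule: finite_induct)
  case empty
  then show ?case by simp
next
  case (insert x F)
  have disj: "Pow F \<inter> insert x ` Pow F = {}" using insert by auto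
  have inj: "inj_on (insert x) (Pow F)" using insert by (auto simp: inj_on_def)
  have "(\<Sum>T\<in>Pow (insert x F). (-1::int) ^ card T)
      = (\<Sum>T\<in>Pow F. (-1::int) ^ card T) + (\<Sum>T\<in>insert x ` Pow F. (-1::int) ^ card T)"
    unfolding Pow_insert using insert disj by (simp add: sum.union_disjoint)
  also have "(\<Sum>T\<in>insert x ` Pow F. (-1::int) ^ card T) = (\<Sum>T\<in>Pow F. (-1::int) ^ card (insert x T))"
    by (rule sum.reindex[OF inj, unfolded comp_def])
  also have "\<dots> = (\<Sum>T\<in>Pow F. - ((-1::int) ^ card T))"
  proof (rule sum.cong[OF refl])
    fix T assume "T \<in> Pow F"
    then have "finite T" "x \<notin> T" using insert finite_subset by auto
    then show "(-1::int) ^ card (insert x T) = - ((-1) ^ card T)" by simp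
  qed
  also have "\<dots> = - (\<Sum>T\<in>Pow F. (-1::int) ^ card T)" by (simp add: sum_negf)
  finally show ?case by simp
qed

lemma prod_primes_facts:
  fixes T :: "nat set"
  assumes "finite T" "\<And>p. p \<in> T \<Longrightarrow> prime p"
  shows "(\<Prod>p\<in>T. p) \<noteq> 0" "prime_factors (\<Prod>p\<in>T. p) = T" "squarefree (\<Prod>p\<in>T. p)"
proof -
  show "(\<Prod>p\<in>T. p) \<noteq> 0" using assms(1) assms(2)[of 0] by auto
  have "prime_factors (\<Prod>p\<in>T. p) = \<Union>((prime_factors \<circ> (\<lambda>p. p)) ` T)"
    by (rule prime_factors_prod) (use assms(1) assms(2)[of 0] in auto)
  also have "\<dots> = T" using assms by (auto simp: prime_prime_factors)
  finally show "prime_factors (\<Prod>p\<in>T. p) = T" .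
  show "squarefree (\<Prod>p\<in>T. p)"
    by (rule squarefree_prod_coprime) (use assms in \<open>auto simp: primes_coprime squarefree_prime\<close>)
qed

lemma mu_prod:
  fixes T :: "nat set"
  assumes "finite T" "\<And>p. p \<in> T \<Longrightarrow> prime p"
  shows "moebius_mu (\<Prod>p\<in>T. p) = (-1) ^ card T"
  using prod_primes_facts[OF assms] by (simp add: moebius_mu_def)

lemma sqf_eq_prod:
  fixes d :: nat
  assumes "d \<noteq> 0" "squarefree d"
  shows "d = (\<Prod>p\<in>prime_factors d. p)"
proof -
  have "(\<Prod>p\<in>prime_factors d. p ^ multiplicity p d) = d"
    using prod_prime_factors[OF assms(1)] by simp
  moreover have "(\<Prod>p\<in>prime_factors d. p ^ multiplicity p d) = (\<Prod>p\<in>prime_factors d. p)"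
    using assms squarefree_factorial_semiring'[OF assms(1)] by (intro prod.cong) auto
  ultimately show ?thesis by simp
qed

lemma mu_sum:
  fixes m :: nat
  assumes "0 < m"
  shows "(\<Sum>d | d dvd m. moebius_mu d) = (if m = 1 then 1 else 0)"
proof -
  define P where "P = prime_factors m"
  have finP: "finite P" unfolding P_def by simp
  have primeP: "\<And>p. p \<in> P \<Longrightarrow> prime p" unfolding P_def by auto
  have sub: "(\<lambda>T. \<Prod>p\<in>T. p) ` Pow P \<subseteq> {d. d dvd m}"
  proof
    fix d assume "d \<in> (\<lambda>T. \<Prod>p\<in>T. p) ` Pow P"
    then obtain T where T: "T \<subseteq> P" "d = (\<Prod>p\<in>T. p)" by auto
    have "(\<Prod>p\<in>T. p) dvd (\<Prod>p\<in>P. p)" by (rule prod_dvd_prod_subset[OF finP T(1)])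
    also have "(\<Prod>p\<in>P. p) dvd (\<Prod>p\<in>P. p ^ multiplicity p m)"
      by (rule prod_dvd_prod) (auto simp: P_def prime_factors_multiplicity)
    also have "\<dots> = m" using prod_prime_factors[of m] assms by (simp add: P_def)
    finally show "d \<in> {d. d dvd m}" using T by simp
  qed
  have "(\<Sum>d | d dvd m. moebius_mu d) = (\<Sum>d\<in>(\<lambda>T. \<Prod>p\<in>T. p) ` Pow P. moebius_mu d)"
  proof (rule sum.mono_neutral_right)
    show "finite {d. d dvd m}" using assms by simp
    show "(\<lambda>T. \<Prod>p\<in>T. p) ` Pow P \<subseteq> {d. d dvd m}" by (rule sub)
    show "\<forall>i\<in>{d. d dvd m} - (\<lambda>T. \<Prod>p\<in>T. p) ` Pow P. moebius_mu i = 0"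
    proof
      fix d assume d: "d \<in> {d. d dvd m} - (\<lambda>T. \<Prod>p\<in>T. p) ` Pow P"
      then have dm: "d dvd m" and nd: "d \<notin> (\<lambda>T. \<Prod>p\<in>T. p) ` Pow P" by auto
      have d0: "d \<noteq> 0" using dm assms by auto
      show "moebius_mu d = 0"
      proof (cases "squarefree d")
        case True
        have "prime_factors d \<subseteq> P" unfolding P_def using dm assms by (intro dvd_prime_factors) auto
        then have "d \<in> (\<lambda>T. \<Prod>p\<in>T. p) ` Pow P" using sqf_eq_prod[OF d0 True] by blast
        then show ?thesis using nd by simp
      next
        case False
        then show ?thesis by (simp add: moebius_mu_def)
      qed
    qed
  qed
  also have "\<dots> = (\<Sum>T\<in>Pow P. moebius_mu (\<Prod>p\<in>T. p))"
  proof (rule sum.reindex[unfolded comp_def])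
    show "inj_on (\<lambda>T. \<Prod>p\<in>T. p) (Pow P)"
    proof (rule inj_onI)
      fix A B assume A: "A \<in> Pow P" and B: "B \<in> Pow P" and eq: "(\<Prod>p\<in>A. p) = (\<Prod>p\<in>B. p)"
      have fA: "finite A" "\<And>p. p \<in> A \<Longrightarrow> prime p" using A finP primeP finite_subset by auto
      have fB: "finite B" "\<And>p. p \<in> B \<Longrightarrow> prime p" using B finP primeP finite_subset by auto
      show "A = B" using prod_primes_facts(2)[OF fA] prod_primes_facts(2)[OF fB] eq by metis
    qed
  qed
  also have "\<dots> = (\<Sum>T\<in>Pow P. (-1::int) ^ card T)"
  proof (rule sum.cong[OF refl])
    fix T assume "T \<in> Pow P"
    then have "finite T" "\<And>p. p \<in> T \<Longrightarrow> prime p" using finP primeP finite_subset by auto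
    then show "moebius_mu (\<Prod>p\<in>T. p) = (-1) ^ card T" by (rule mu_prod)
  qed
  also have "\<dots> = (if P = {} then 1 else 0)" by (rule pow_sum[OF finP])
  also have "(P = {}) = (m = 1)"
  proof
    assume "P = {}"
    then have "prime_factorization m = {#}" unfolding P_def by simp
    then show "m = 1" using assms by (simp add: prime_factorization_empty_iff)
  next
    assume "m = 1" then show "P = {}" unfolding P_def by simp
  qed
  finally show ?thesis .
qed

lemma div_div_nat: "0 < n \<Longrightarrow> k dvd n \<Longrightarrow> n div (n div k) = (k::nat)"
  by (metis dvd_div_eq_0_iff dvd_mult_div_cancel gr_implies_not0 nonzero_mult_div_cancel_right)

lemma mobius_inv:
  fixes F G :: "nat \<Rightarrow> int"
  assumes FG: "\<And>m. 0 < m \<Longrightarrow> F m = (\<Sum>d | d dvd m. G d)" and n: "0 < n"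
  shows "(\<Sum>d | d dvd n. F d * moebius_mu (n div d)) = G n"
proof -
  define Dn where "Dn = {d. d dvd n}"
  have finD: "finite Dn" using n by (simp add: Dn_def)
  have "(\<Sum>d\<in>Dn. F d * moebius_mu (n div d)) = (\<Sum>k\<in>Dn. F (n div k) * moebius_mu k)"
    by (rule sum.reindex_bij_witness[of _ "\<lambda>k. n div k" "\<lambda>k. n div k"])
       (auto simp: Dn_def div_div_nat[OF n] dvd_div_eq_mult n div_dvd_div)
  also have "\<dots> = (\<Sum>k\<in>Dn. \<Sum>e\<in>{e\<in>Dn. e dvd n div k}. moebius_mu k * G e)"
  proof (rule sum.cong[OF refl])
    fix k assume k: "k \<in> Dn"
    then have pos: "0 < n div k" using n by (auto simp: Dn_def dvd_div_eq_0_iff intro!: Nat.gr0I)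
    have "{e\<in>Dn. e dvd n div k} = {e. e dvd n div k}"
      using k by (auto simp: Dn_def) (metis dvd_div_mult_self dvd_mult2)
    then show "F (n div k) * moebius_mu k = (\<Sum>e\<in>{e\<in>Dn. e dvd n div k}. moebius_mu k * G e)"
      using FG[OF pos] by (simp add: sum_distrib_left mult.commute)
  qed
  also have "\<dots> = (\<Sum>e\<in>Dn. \<Sum>k\<in>{k\<in>Dn. e dvd n div k}. moebius_mu k * G e)"
    by (rule sum.swap_restrict[OF finD finD])
  also have "\<dots> = (\<Sum>e\<in>Dn. G e * (\<Sum>k | k dvd n div e. moebius_mu k))"
  proof (rule sum.cong[OF refl])
    fix e assume e: "e \<in> Dn"
    have e0: "e \<noteq> 0" using e n by (auto simp: Dn_def)
    have "{k\<in>Dn. e dvd n div k} = {k. k dvd n div e}"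
    proof (rule set_eqI)
      fix k
      show "k \<in> {k\<in>Dn. e dvd n div k} \<longleftrightarrow> k \<in> {k. k dvd n div e}"
      proof
        assume "k \<in> {k\<in>Dn. e dvd n div k}"
        then have kn: "k dvd n" and "e dvd n div k" by (auto simp: Dn_def)
        have k0: "k \<noteq> 0" using kn n by auto
        then have "e * k dvd n" using \<open>e dvd n div k\<close> kn dvd_div_iff_mult by blast
        then show "k \<in> {k. k dvd n div e}" using e e0 by (simp add: Dn_def dvd_div_iff_mult mult.commute)
      next
        assume "k \<in> {k. k dvd n div e}"
        then have "k * e dvd n" using e e0 by (simp add: Dn_def dvd_div_iff_mult)
        moreover have k0: "k \<noteq> 0" using \<open>k * e dvd n\<close> n by auto
        ultimately show "k \<in> {k\<in>Dn. e dvd n div k}"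
          by (auto simp: Dn_def dvd_div_iff_mult mult.commute intro: dvd_mult_left)
      qed
    qed
    then show "(\<Sum>k\<in>{k\<in>Dn. e dvd n div k}. moebius_mu k * G e) = G e * (\<Sum>k | k dvd n div e. moebius_mu k)"
      by (simp add: sum_distrib_left mult.commute)
  qed
  also have "\<dots> = (\<Sum>e\<in>Dn. if e = n then G e else 0)"
  proof (rule sum.cong[OF refl])
    fix e assume e: "e \<in> Dn"
    have pos: "0 < n div e" using e n by (auto simp: Dn_def dvd_div_eq_0_iff intro!: Nat.gr0I)
    have "n div e = 1 \<longleftrightarrow> e = n" using e n by (auto simp: Dn_def)
    then show "G e * (\<Sum>k | k dvd n div e. moebius_mu k) = (if e = n then G e else 0)"
      using mu_sum[OF pos] by simp
  qed
  also have "\<dots> = G n" using finD by (simp add: Dn_def)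
  finally show ?thesis by (simp add: Dn_def)
qed

theorem theorem4p1:
  fixes n :: nat
  assumes "n \<ge> 1"
  shows "orb n = (\<Sum>d | d dvd n. orb_d 1 d) \<and>
    real (orb_d 1 n) = (\<Sum>d | d dvd n. real (perrin d) * real_of_int (moebius_mu (n div d))) / real n"
proof
  have n: "0 < n" using assms by simp
  show "orb n = (\<Sum>d | d dvd n. orb_d 1 d)" by (rule orb_sum[OF n])
  have FG: "int (perrin m) = (\<Sum>d | d dvd m. int (d * orb_d 1 d))" if m: "0 < m" for m
  proof -
    have "int (perrin m) = int (\<Sum>d | d dvd m. d * orb_d 1 d)" using perrin_sum[OF m] by simp
    then show ?thesis by (simp only: of_nat_sum)
  qed
  have inv: "(\<Sum>d | d dvd n. int (perrin d) * moebius_mu (n div d)) = int (n * orb_d 1 n)"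
    by (rule mobius_inv[where F = "\<lambda>m. int (perrin m)" and G = "\<lambda>d. int (d * orb_d 1 d)", OF FG n])
  have "(\<Sum>d | d dvd n. real (perrin d) * real_of_int (moebius_mu (n div d)))
      = real_of_int (\<Sum>d | d dvd n. int (perrin d) * moebius_mu (n div d))"
    by (simp add: of_int_sum)
  also have "\<dots> = real n * real (orb_d 1 n)" using inv by simp
  finally show "real (orb_d 1 n) = (\<Sum>d | d dvd n. real (perrin d) * real_of_int (moebius_mu (n div d))) / real n"
    using n by simp
qed

end
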